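(* Fix $\alpha>0$. For each $N\ge 2$, let $T_1,\ldots,T_N$ be drawn independently and uniformly at random from $\{n\in\mathbb{N}: n\le e^{\alpha N}\}$, and let $\Gamma_{j,k}=\gcd(T_j,T_k)$. Let $\mathcal{P}$ denote the set of rational primes. Then for every $s\in(0,1)$ the product \[ C_s:=\prod_{p\in\mathcal{P}}\left(1+\frac{p^s-1}{p^2-p^s}\right) \] is finite, and for every $b>0$ and every $N\ge 2$, \[ \mathbb{P}\Big[\max_{1\le j<k\le N}\Gamma_{j,k}\ge N^{2/s}b^{1/s}\Big]\le \frac{C_s}{2b}. \] *)

theory Defs
  imports "HOL-Probability.Probability"
begin

definition Cfactor :: "real \<Rightarrow> nat \<Rightarrow> real" where
  "Cfactor s n = (if prime n then 1 + (real n powr s - 1) / (real n ^ 2 - real n powr s) else 1)"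

definition C_const :: "real \<Rightarrow> real" where
  "C_const s = (\<Prod>n. Cfactor s n)"

text \<open>The sample space {n in N : n <= e^(alpha N)}, N = positive integers.\<close>
definition sample_set :: "real \<Rightarrow> nat \<Rightarrow> nat set" where
  "sample_set \<alpha> N = {n. 1 \<le> n \<and> real n \<le> exp (\<alpha> * real N)}"

text \<open>Joint law of T_1..T_N, i.i.d. uniform on sample_set (values off {1..N} are 0).\<close>
definition T_pmf :: "real \<Rightarrow> nat \<Rightarrow> (nat \<Rightarrow> nat) pmf" where
  "T_pmf \<alpha> N = Pi_pmf {1..N} 0 (\<lambda>_. pmf_of_set (sample_set \<alpha> N))"

end

theory Submission
  imports Defs
begin


lemma Cfactor_ge1:
  assumes "0 < s" "s < 1"
  shows "Cfactor s n \<ge> 1"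
proof (cases "prime n")
  case True
  then have n2: "real n \<ge> 2" using prime_ge_2_nat by (metis of_nat_le_iff of_nat_numeral)
  have a1: "real n powr s \<ge> 1" using n2 assms by (intro ge_one_powr_ge_zero) auto
  have a2: "real n powr s < real n powr 1" using n2 assms by (intro powr_less_mono) auto
  have a3: "real n < real n * real n" using n2 by simp
  have "(real n powr s - 1) / (real n ^ 2 - real n powr s) \<ge> 0"
    apply (intro divide_nonneg_nonneg)
    using a1 apply linarith
  proof -
    have "real n powr 1 = real n" using n2 by simp
    then have "real n powr s < real n * real n" using a2 a3 by linarith
    then show "0 \<le> real n ^ 2 - real n powr s" by (simp add: power2_eq_square)
  qed
  then show ?thesis using True by (simp add: Cfactor_def)
qed (simp add: Cfactor_def)

lemma Cfactor_bound:
  assumes "0 < s" "s < 1"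
  shows "\<bar>Cfactor s n - 1\<bar> \<le> 2 * real n powr (s - 2)"
proof (cases "prime n")
  case True
  then have n2: "real n \<ge> 2" using prime_ge_2_nat by (metis of_nat_le_iff of_nat_numeral)
  define t where "t = real n powr s"
  have t1: "t \<ge> 1" unfolding t_def using n2 assms by (intro ge_one_powr_ge_zero) auto
  have "t < real n powr 1" unfolding t_def using n2 assms by (intro powr_less_mono) auto
  then have tn: "t < real n" using n2 by simp
  have "real n * 2 \<le> real n * real n" using n2 by (intro mult_left_mono) auto
  then have hn: "real n ^ 2 / 2 \<le> real n ^ 2 - t" using tn by (simp add: power2_eq_square)
  have pos: "real n ^ 2 / 2 > 0" using n2 by simp
  have "(t - 1) / (real n ^ 2 - t) \<le> t / (real n ^ 2 / 2)"
    using hn pos t1 by (intro frac_le) auto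
  also have "\<dots> = 2 * (t / real n powr 2)" using n2 by (simp add: powr_numeral)
  also have "t / real n powr 2 = real n powr (s - 2)" unfolding t_def by (simp add: powr_diff)
  finally have "(t - 1) / (real n ^ 2 - t) \<le> 2 * real n powr (s - 2)" .
  moreover have "(t - 1) / (real n ^ 2 - t) \<ge> 0" using t1 tn n2 hn pos by simp
  ultimately show ?thesis using True t1 tn hn pos unfolding Cfactor_def t_def[symmetric] by simp
qed (simp add: Cfactor_def)

lemma Cfactor_conv:
  assumes "0 < s" "s < 1"
  shows "convergent_prod (Cfactor s)"
proof -
  have "summable (\<lambda>n. 2 * real n powr (s - 2))"
    using summable_real_powr_iff[of "s-2"] assms by (intro summable_mult) auto
  then have "summable (\<lambda>n. norm (Cfactor s n - 1))"
    by (rule summable_comparison_test'[where N=0]) (use Cfactor_bound[OF assms] in auto)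
  then have "abs_convergent_prod (Cfactor s)" by (rule summable_imp_abs_convergent_prod)
  then show ?thesis by (rule abs_convergent_prod_imp_convergent_prod)
qed

lemma Cfactor_prod_le:
  assumes "0 < s" "s < 1"
  shows "(\<Prod>n<K. Cfactor s n) \<le> C_const s"
  unfolding C_const_def
  using Cfactor_conv[OF assms] Cfactor_ge1[OF assms]
  by (intro prod_le_prodinf) (auto simp: convergent_prod_has_prod_iff intro: order.trans[OF zero_le_one])



definition ind :: "nat \<Rightarrow> nat \<Rightarrow> real" where
  "ind d a = (if d dvd a then 1 else 0)"

definition Gs :: "real \<Rightarrow> nat set \<Rightarrow> nat \<Rightarrow> nat \<Rightarrow> real" where
  "Gs s P a b = (\<Prod>p\<in>P. (real p powr s) ^ multiplicity p (gcd a b))"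

fun cc :: "real \<Rightarrow> nat \<Rightarrow> real" where
  "cc t 0 = 1"
| "cc t (Suc k) = t ^ Suc k - t ^ k"

lemma cc_nonneg: "t \<ge> 1 \<Longrightarrow> cc t k \<ge> 0"
  by (cases k) (auto intro: power_increasing)

lemma cc_sum_upto: "(\<Sum>k\<le>m. cc t k) = t ^ m"
  by (induction m) auto

lemma cc_tele:
  assumes "m \<le> K"
  shows "t ^ m = (\<Sum>k\<le>K. cc t k * (if k \<le> m then 1 else 0))"
proof -
  have "(\<Sum>k\<le>K. cc t k * (if k \<le> m then 1 else 0)) = (\<Sum>k\<le>K. if k \<le> m then cc t k else 0)"
    by (intro sum.cong) auto
  also have "\<dots> = sum (cc t) {k\<in>{..K}. k \<le> m}"
    by (rule sum.inter_filter[symmetric]) simp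
  also have "{k\<in>{..K}. k \<le> m} = {..m}" using assms by auto
  finally show ?thesis by (simp add: cc_sum_upto)
qed

lemma ind_card:
  assumes "d \<ge> 1"
  shows "(\<Sum>a\<in>{1..M}. ind d a) \<le> real M / real d"
proof -
  have "(\<Sum>a\<in>{1..M}. ind d a) = real (card {a\<in>{1..M}. d dvd a})"
    unfolding ind_def by (simp add: sum.If_cases Int_def)
  also have "{a\<in>{1..M}. d dvd a} \<subseteq> (\<lambda>i. d * i) ` {1..M div d}"
  proof
    fix a assume "a \<in> {a\<in>{1..M}. d dvd a}"
    then obtain i where a: "a = d * i" "1 \<le> a" "a \<le> M" by auto
    then have "i \<ge> 1" by (cases i) auto
    moreover have "i \<le> M div d" using a assms
      by (metis div_le_mono nonzero_mult_div_cancel_left not_one_le_zero)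
    ultimately show "a \<in> (\<lambda>i. d * i) ` {1..M div d}" using a by auto
  qed
  then have "card {a\<in>{1..M}. d dvd a} \<le> M div d"
    by (metis (no_types, lifting) card_atLeastAtMost card_image_le diff_Suc_1 finite_atLeastAtMost surj_card_le)
  then have "real (card {a\<in>{1..M}. d dvd a}) \<le> real (M div d)" by simp
  also have "real (M div d) \<le> real M / real d"
  proof -
    have "M div d * d \<le> M" by (metis div_mult_mod_eq le_add1)
    then have "real (M div d) * real d \<le> real M" by (metis of_nat_le_iff of_nat_mult)
    then show ?thesis using assms by (simp add: pos_le_divide_eq)
  qed
  finally show ?thesis .
qed

lemma geom_bound:
  assumes "prime q" "0 < s" "s < 1"
  shows "(\<Sum>k\<le>K. cc (real q powr s) k / (real q ^ 2) ^ k) \<le> Cfactor s q"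
proof -
  define t where "t = real q powr s"
  have n2: "real q \<ge> 2" using prime_ge_2_nat assms by (metis of_nat_le_iff of_nat_numeral)
  have t1: "t \<ge> 1" unfolding t_def using n2 assms by (intro ge_one_powr_ge_zero) auto
  have "t < real q powr 1" unfolding t_def using n2 assms by (intro powr_less_mono) auto
  then have tn: "t < real q" using n2 by simp
  define Q where "Q = real q ^ 2"
  have qq: "real q < Q" unfolding Q_def power2_eq_square using n2 by simp
  define \<rho> where "\<rho> = t / Q"
  have Qt: "t < Q" using tn qq by linarith
  have Q0: "Q > 0" using n2 Q_def by simp
  have r0: "0 \<le> \<rho>" "\<rho> < 1" using Qt Q0 t1 by (auto simp: \<rho>_def)
  have geo: "(\<Sum>i<n. \<rho> ^ i) \<le> 1 / (1 - \<rho>)" for n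
  proof -
    have "(\<Sum>i<n. \<rho> ^ i) = (1 - \<rho> ^ n) / (1 - \<rho>)" using r0 by (simp add: sum_gp_strict)
    also have "\<dots> \<le> 1 / (1 - \<rho>)" using r0 by (intro divide_right_mono) auto
    finally show ?thesis .
  qed
  have main: "(\<Sum>k\<le>K. cc t k / Q ^ k) \<le> 1 + (t - 1) / (Q - t)"
  proof (cases K)
    case 0
    then show ?thesis using t1 Qt by simp
  next
    case (Suc K')
    have trm: "cc t (Suc i) / Q ^ Suc i = (t - 1) / Q * \<rho> ^ i" for i
      using t1 Q0 by (simp add: \<rho>_def power_divide field_simps)
    have "(\<Sum>k\<le>K. cc t k / Q ^ k) = 1 + (\<Sum>i\<le>K'. cc t (Suc i) / Q ^ Suc i)"
      unfolding Suc by (subst sum.atMost_Suc_shift) simp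
    also have "\<dots> = 1 + (t - 1) / Q * (\<Sum>i<Suc K'. \<rho> ^ i)"
      by (simp only: trm sum_distrib_left lessThan_Suc_atMost)
    also have "\<dots> \<le> 1 + (t - 1) / Q * (1 / (1 - \<rho>))"
      using geo[of "Suc K'"] t1 Q0 by (intro add_left_mono mult_left_mono) (auto simp del: sum.lessThan_Suc)
    also have "(t - 1) / Q * (1 / (1 - \<rho>)) = (t - 1) / (Q - t)"
      using Q0 Qt by (simp add: \<rho>_def field_simps)
    finally show ?thesis by simp
  qed
  then show ?thesis using assms by (simp add: Cfactor_def t_def Q_def)
qed



lemma mult_le_M:
  assumes "prime (q::nat)" "a \<in> {1..M}" "b \<in> {1..M}"
  shows "multiplicity q (gcd a b) \<le> M"
proof -
  let ?m = "multiplicity q (gcd a b)"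
  have g0: "gcd a b > 0" using assms by auto
  have "q ^ ?m dvd gcd a b" by (rule multiplicity_dvd)
  then have "q ^ ?m \<le> gcd a b" using g0 by (rule dvd_imp_le)
  also have "gcd a b \<le> a" using assms by (intro gcd_le1_nat) auto
  also have "a \<le> M" using assms by auto
  finally have "q ^ ?m \<le> M" .
  moreover have "?m < 2 ^ ?m" by (rule less_exp)
  moreover have "2 ^ ?m \<le> q ^ ?m" using prime_ge_2_nat[OF assms(1)] by (intro power_mono) auto
  ultimately show ?thesis by linarith
qed

lemma ind_mult:
  assumes "coprime d e"
  shows "ind d a * ind e a = ind (d * e) a"
  using assms unfolding ind_def
  by (auto intro: divides_mult dest: dvd_mult_left dvd_mult_right)

lemma main_ind:
  assumes "finite P" "\<forall>p\<in>P. prime p" "0 < s" "s < 1"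
  shows "\<forall>d. d \<ge> 1 \<and> (\<forall>p\<in>P. \<not> p dvd d) \<longrightarrow>
     (\<Sum>a\<in>{1..M}. \<Sum>b\<in>{1..M}. ind d a * ind d b * Gs s P a b)
       \<le> (real M / real d)^2 * (\<Prod>p\<in>P. Cfactor s p)"
  using assms(1,2)
proof (induction P rule: finite_induct)
  case empty
  show ?case
  proof (intro allI impI)
    fix d :: nat assume d: "d \<ge> 1 \<and> (\<forall>p\<in>{}. \<not> p dvd d)"
    have "(\<Sum>a\<in>{1..M}. \<Sum>b\<in>{1..M}. ind d a * ind d b * Gs s {} a b)
        = (\<Sum>a\<in>{1..M}. ind d a) * (\<Sum>b\<in>{1..M}. ind d b)"
      by (simp add: Gs_def sum_product)
    also have "\<dots> \<le> (real M / real d) * (real M / real d)"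
      using ind_card[of d M] d by (intro mult_mono) (auto simp: ind_def intro: sum_nonneg)
    finally show "(\<Sum>a\<in>{1..M}. \<Sum>b\<in>{1..M}. ind d a * ind d b * Gs s {} a b)
       \<le> (real M / real d)^2 * (\<Prod>p\<in>{}. Cfactor s p)" by (simp add: power2_eq_square)
  qed
next
  case (insert q P)
  have q: "prime q" using insert.prems by auto
  have Pp: "\<forall>p\<in>P. prime p" using insert.prems by auto
  note IH = insert.IH[OF Pp]
  define t where "t = real q powr s"
  have n2: "real q \<ge> 2" using prime_ge_2_nat q by (metis of_nat_le_iff of_nat_numeral)
  have t1: "t \<ge> 1" unfolding t_def using n2 insert.prems assms by (intro ge_one_powr_ge_zero) auto
  have Cq: "0 \<le> (\<Prod>p\<in>P. Cfactor s p)"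
    using Cfactor_ge1[OF assms(3,4)] by (intro prod_nonneg) (auto intro: order.trans[OF zero_le_one])
  show ?case
  proof (intro allI impI)
    fix d :: nat assume d: "d \<ge> 1 \<and> (\<forall>p\<in>insert q P. \<not> p dvd d)"
    have cop: "coprime d (q ^ k)" for k
    proof -
      have "coprime q d" using d q by (simp add: prime_imp_coprime)
      then show ?thesis by (simp add: coprime_commute)
    qed
    have dk: "d * q ^ k \<ge> 1 \<and> (\<forall>p\<in>P. \<not> p dvd d * q ^ k)" for k
    proof -
      have "0 < q ^ k" using q by (simp add: prime_gt_0_nat)
      then have "d * q ^ k \<ge> 1" using d by (simp add: Suc_le_eq)
      moreover have "\<not> p dvd d * q ^ k" if p: "p \<in> P" for p
      proof
        assume "p dvd d * q ^ k"
        moreover have pp: "prime p" using p Pp by auto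
        ultimately have "p dvd d \<or> p dvd q ^ k" by (simp add: prime_dvd_mult_iff)
        moreover have "\<not> p dvd d" using d p by auto
        ultimately have "p dvd q" using pp prime_dvd_power by auto
        then have "p = q" using pp q by (simp add: primes_dvd_imp_eq)
        then show False using p insert.hyps by auto
      qed
      ultimately show ?thesis by auto
    qed
    have pt: "ind d a * ind d b * Gs s (insert q P) a b
        = (\<Sum>k\<le>M. cc t k * (ind (d * q ^ k) a * ind (d * q ^ k) b * Gs s P a b))"
      if ab: "a \<in> {1..M}" "b \<in> {1..M}" for a b
    proof -
      let ?m = "multiplicity q (gcd a b)"
      have g0: "gcd a b \<noteq> 0" using ab by auto
      have G1: "Gs s (insert q P) a b = t ^ ?m * Gs s P a b"
        using insert.hyps by (simp add: Gs_def t_def)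
      have tm: "t ^ ?m = (\<Sum>k\<le>M. cc t k * (if k \<le> ?m then 1 else 0))"
        by (rule cc_tele) (rule mult_le_M[OF q ab])
      have iff: "(k \<le> ?m) \<longleftrightarrow> q ^ k dvd a \<and> q ^ k dvd b" for k
      proof -
        have "(k \<le> ?m) \<longleftrightarrow> q ^ k dvd gcd a b"
          using power_dvd_iff_le_multiplicity[OF g0, of q k] q not_prime_unit by blast
        then show ?thesis by simp
      qed
      have "ind d a * ind d b * (if k \<le> ?m then 1 else 0)
            = ind (d * q ^ k) a * ind (d * q ^ k) b" for k
      proof -
        have "(if k \<le> ?m then 1 else 0) = ind (q ^ k) a * ind (q ^ k) b"
          using iff[of k] by (simp add: ind_def)
        then have "ind d a * ind d b * (if k \<le> ?m then 1 else 0)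
            = (ind d a * ind (q ^ k) a) * (ind d b * ind (q ^ k) b)" by simp
        also have "\<dots> = ind (d * q ^ k) a * ind (d * q ^ k) b"
          using cop by (simp add: ind_mult)
        finally show ?thesis .
      qed
      then show ?thesis
        unfolding G1 tm sum_distrib_left sum_distrib_right
        by (intro sum.cong refl) (metis (no_types, lifting) mult.commute mult.left_commute)
    qed
    have "(\<Sum>a\<in>{1..M}. \<Sum>b\<in>{1..M}. ind d a * ind d b * Gs s (insert q P) a b)
        = (\<Sum>a\<in>{1..M}. \<Sum>b\<in>{1..M}. \<Sum>k\<le>M. cc t k * (ind (d * q ^ k) a * ind (d * q ^ k) b * Gs s P a b))"
      using pt by (intro sum.cong refl) auto
    also have "\<dots> = (\<Sum>k\<le>M. cc t k * (\<Sum>a\<in>{1..M}. \<Sum>b\<in>{1..M}. ind (d * q ^ k) a * ind (d * q ^ k) b * Gs s P a b))"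
      by (simp add: sum_distrib_left sum.swap[of _ "{..M}"])
    also have "\<dots> \<le> (\<Sum>k\<le>M. cc t k * ((real M / real (d * q ^ k))^2 * (\<Prod>p\<in>P. Cfactor s p)))"
    proof (intro sum_mono mult_left_mono)
      fix k show "0 \<le> cc t k" using cc_nonneg[OF t1] .
      show "(\<Sum>a\<in>{1..M}. \<Sum>b\<in>{1..M}. ind (d * q ^ k) a * ind (d * q ^ k) b * Gs s P a b)
        \<le> (real M / real (d * q ^ k))^2 * (\<Prod>p\<in>P. Cfactor s p)"
        using IH dk[of k] by blast
    qed
    also have "\<dots> = (real M / real d)^2 * (\<Prod>p\<in>P. Cfactor s p) * (\<Sum>k\<le>M. cc t k / (real q ^ 2) ^ k)"
    proof -
      have "cc t k * ((real M / real (d * q ^ k))^2 * (\<Prod>p\<in>P. Cfactor s p))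
          = (real M / real d)^2 * (\<Prod>p\<in>P. Cfactor s p) * (cc t k / (real q ^ 2) ^ k)" for k
        by (simp add: power_divide power_mult_distrib flip: power_mult) (simp add: mult_ac power_mult)
      then show ?thesis by (simp add: sum_distrib_left)
    qed
    also have "\<dots> \<le> (real M / real d)^2 * (\<Prod>p\<in>P. Cfactor s p) * Cfactor s q"
      using geom_bound[OF q assms(3,4), of M] Cq unfolding t_def by (intro mult_left_mono) auto
    also have "\<dots> = (real M / real d)^2 * (\<Prod>p\<in>insert q P. Cfactor s p)"
      using insert.hyps by simp
    finally show "(\<Sum>a\<in>{1..M}. \<Sum>b\<in>{1..M}. ind d a * ind d b * Gs s (insert q P) a b)
       \<le> (real M / real d)^2 * (\<Prod>p\<in>insert q P. Cfactor s p)" .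
  qed
qed



lemma Gs_gcd:
  assumes "a \<in> {1..M}" "b \<in> {1..M}" "0 < s"
  shows "Gs s {p. prime p \<and> p \<le> M} a b = real (gcd a b) powr s"
proof -
  let ?P = "{p. prime p \<and> p \<le> M}"
  let ?g = "gcd a b"
  have g0: "?g \<noteq> 0" using assms by auto
  have ga: "?g \<le> a" using assms by (intro gcd_le1_nat) auto
  have aM: "a \<le> M" using assms(1) by simp
  have gM: "?g \<le> M" by (rule le_trans[OF ga aM])
  have fin: "finite ?P" by simp
  have sub: "prime_factors ?g \<subseteq> ?P"
  proof
    fix p assume "p \<in> prime_factors ?g"
    then have "prime p" "p dvd ?g" by (auto simp: in_prime_factors_iff)
    then show "p \<in> ?P" using g0 gM dvd_imp_le[of p ?g] by auto
  qed
  have "(\<Prod>p\<in>?P. p ^ multiplicity p ?g) = (\<Prod>p\<in>prime_factors ?g. p ^ multiplicity p ?g)"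
    using sub fin
    by (intro prod.mono_neutral_right) (auto simp: in_prime_factors_iff not_dvd_imp_multiplicity_0)
  also have "\<dots> = ?g" using prod_prime_factors[OF g0] by simp
  finally have pg: "(\<Prod>p\<in>?P. p ^ multiplicity p ?g) = ?g" .
  have "Gs s ?P a b = (\<Prod>p\<in>?P. (real p ^ multiplicity p ?g) powr s)"
    unfolding Gs_def
  proof (intro prod.cong refl)
    fix p assume "p \<in> ?P"
    then have p0: "real p > 0" using prime_gt_0_nat by auto
    show "(real p powr s) ^ multiplicity p ?g = (real p ^ multiplicity p ?g) powr s"
    proof -
      have "(real p powr s) ^ multiplicity p ?g = real p powr (real (multiplicity p ?g) * s)"
        using p0 by (subst powr_power) auto
      also have "\<dots> = (real p powr real (multiplicity p ?g)) powr s"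
        by (simp add: powr_powr)
      also have "real p powr real (multiplicity p ?g) = real p ^ multiplicity p ?g"
        using p0 by (rule powr_realpow)
      finally show ?thesis .
    qed
  qed
  also have "\<dots> = (\<Prod>p\<in>?P. real p ^ multiplicity p ?g) powr s"
    by (rule prod_powr_distrib[symmetric])
  also have "(\<Prod>p\<in>?P. real p ^ multiplicity p ?g) = real ?g"
    using pg by (metis (mono_tags, lifting) of_nat_power of_nat_prod prod.cong)
  finally show ?thesis .
qed

lemma gcd_sum_bound:
  assumes "0 < s" "s < 1"
  shows "(\<Sum>a\<in>{1..M}. \<Sum>b\<in>{1..M}. real (gcd a b) powr s) \<le> real M ^ 2 * C_const s"
proof -
  let ?P = "{p. prime p \<and> p \<le> M}"
  have "(\<Sum>a\<in>{1..M}. \<Sum>b\<in>{1..M}. real (gcd a b) powr s)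
      = (\<Sum>a\<in>{1..M}. \<Sum>b\<in>{1..M}. ind 1 a * ind 1 b * Gs s ?P a b)"
    using Gs_gcd assms by (intro sum.cong refl) (auto simp: ind_def)
  also have "\<dots> \<le> (real M / real 1)^2 * (\<Prod>p\<in>?P. Cfactor s p)"
  proof -
    have f: "finite ?P" by simp
    have pp: "\<forall>p\<in>?P. prime p" by simp
    have "\<forall>p\<in>?P. \<not> p dvd 1" by auto
    then show ?thesis using main_ind[OF f pp assms, rule_format, of 1] by simp
  qed
  also have "(\<Prod>p\<in>?P. Cfactor s p) = (\<Prod>n<Suc M. Cfactor s n)"
  proof (rule prod.mono_neutral_left)
    show "?P \<subseteq> {..<Suc M}" by auto
    show "\<forall>i\<in>{..<Suc M} - ?P. Cfactor s i = 1" by (auto simp: Cfactor_def)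
  qed simp
  also have "(real M / real 1)^2 * (\<Prod>n<Suc M. Cfactor s n) \<le> (real M / real 1)^2 * C_const s"
    by (intro mult_left_mono Cfactor_prod_le[OF assms]) simp
  finally show ?thesis by simp
qed



lemma sample_set_eq:
  assumes "\<alpha> > 0"
  shows "sample_set \<alpha> N = {1..nat \<lfloor>exp (\<alpha> * real N)\<rfloor>}"
    and "nat \<lfloor>exp (\<alpha> * real N)\<rfloor> \<ge> 1"
proof -
  have e: "exp (\<alpha> * real N) \<ge> 1" using assms by simp
  have "real n \<le> exp (\<alpha> * real N) \<longleftrightarrow> n \<le> nat \<lfloor>exp (\<alpha> * real N)\<rfloor>" for n
  proof
    assume "real n \<le> exp (\<alpha> * real N)" then show "n \<le> nat \<lfloor>exp (\<alpha> * real N)\<rfloor>"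
      by (rule le_nat_floor)
  next
    assume "n \<le> nat \<lfloor>exp (\<alpha> * real N)\<rfloor>"
    moreover have "0 \<le> \<lfloor>exp (\<alpha> * real N)\<rfloor>" using e by simp
    ultimately have "int n \<le> \<lfloor>exp (\<alpha> * real N)\<rfloor>" by (simp add: le_nat_iff)
    then show "real n \<le> exp (\<alpha> * real N)" by (simp add: le_floor_iff)
  qed
  note ex = this
  show "sample_set \<alpha> N = {1..nat \<lfloor>exp (\<alpha> * real N)\<rfloor>}"
  proof (intro set_eqI)
    fix n show "n \<in> sample_set \<alpha> N \<longleftrightarrow> n \<in> {1..nat \<lfloor>exp (\<alpha> * real N)\<rfloor>}"
      unfolding sample_set_def mem_Collect_eq atLeastAtMost_iff using ex[of n] by blast
  qed
  show "nat \<lfloor>exp (\<alpha> * real N)\<rfloor> \<ge> 1" by (rule le_nat_floor) (use e in simp)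
qed

lemma Pi_pmf_pair:
  assumes "finite A" "j \<in> A" "k \<in> A" "j \<noteq> k"
  shows "map_pmf (\<lambda>T. (T j, T k)) (Pi_pmf A dflt p) = pair_pmf (p j) (p k)"
proof -
  define B where "B = A - {j, k}"
  have A: "A = insert j (insert k B)" using assms by (auto simp: B_def)
  have fB: "finite B" using assms by (simp add: B_def)
  have "Pi_pmf A dflt p = map_pmf (\<lambda>(y, f). f(j := y)) (pair_pmf (p j) (Pi_pmf (insert k B) dflt p))"
    unfolding A using fB assms by (subst Pi_pmf_insert) (auto simp: B_def)
  also have "Pi_pmf (insert k B) dflt p = map_pmf (\<lambda>(y, f). f(k := y)) (pair_pmf (p k) (Pi_pmf B dflt p))"
    using fB by (subst Pi_pmf_insert) (auto simp: B_def)
  finally have eq: "Pi_pmf A dflt p = map_pmf (\<lambda>(y, f). f(j := y))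
      (pair_pmf (p j) (map_pmf (\<lambda>(y, f). f(k := y)) (pair_pmf (p k) (Pi_pmf B dflt p))))" .
  show ?thesis
    unfolding eq using assms
    by (simp add: pmf.map_comp o_def case_prod_unfold map_pmf_def pair_pmf_def bind_assoc_pmf
        bind_return_pmf bind_return_pmf')
qed

lemma pair_pmf_of_set:
  assumes "finite S" "S \<noteq> {}"
  shows "pair_pmf (pmf_of_set S) (pmf_of_set S) = pmf_of_set (S \<times> S)"
proof (rule pmf_eqI)
  fix z :: "'a \<times> 'a"
  obtain a b where z: "z = (a, b)" by (cases z)
  have ne: "S \<times> S \<noteq> {}" using assms by simp
  have "pmf (pair_pmf (pmf_of_set S) (pmf_of_set S)) z = pmf (pmf_of_set S) a * pmf (pmf_of_set S) b"
    by (simp add: z pmf_pair)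
  also have "\<dots> = indicator S a / card S * (indicator S b / card S)"
    using assms by simp
  also have "\<dots> = indicator (S \<times> S) (a, b) / card (S \<times> S)"
    by (simp add: indicator_def card_cartesian_product)
  also have "\<dots> = pmf (pmf_of_set (S \<times> S)) z"
    using assms ne by (simp add: z)
  finally show "pmf (pair_pmf (pmf_of_set S) (pmf_of_set S)) z = pmf (pmf_of_set (S \<times> S)) z" .
qed



lemma card_bound:
  assumes "x > 0" "0 < s" "s < 1"
  shows "real (card ({1..M} \<times> {1..M} \<inter> {(a, b). x \<le> real (gcd a b)}))
     \<le> real M ^ 2 * C_const s / x powr s"
proof -
  let ?S = "{1..M::nat}"
  let ?B = "?S \<times> ?S \<inter> {(a, b). x \<le> real (gcd a b)}"
  let ?g = "\<lambda>z. real (gcd (fst z) (snd z)) powr s / x powr s"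
  have xs: "x powr s > 0" using assms by simp
  have "real (card ?B) = (\<Sum>z\<in>?B. 1)" by simp
  also have "\<dots> \<le> (\<Sum>z\<in>?B. ?g z)"
  proof (rule sum_mono)
    fix z assume "z \<in> ?B"
    then have "x \<le> real (gcd (fst z) (snd z))" by auto
    then have "x powr s \<le> real (gcd (fst z) (snd z)) powr s"
      using assms by (intro powr_mono2) auto
    then show "1 \<le> ?g z" using xs by simp
  qed
  also have "\<dots> \<le> (\<Sum>z\<in>?S \<times> ?S. ?g z)"
    by (intro sum_mono2) auto
  also have "\<dots> = (\<Sum>a\<in>?S. \<Sum>b\<in>?S. real (gcd a b) powr s) / x powr s"
    by (simp add: sum.cartesian_product sum_divide_distrib case_prod_beta)
  also have "\<dots> \<le> real M ^ 2 * C_const s / x powr s"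
    using gcd_sum_bound[OF assms(2,3), of M] xs by (intro divide_right_mono) auto
  finally show ?thesis .
qed

lemma pair_prob:
  assumes "\<alpha> > 0" "0 < s" "s < 1" "j \<in> {1..N}" "k \<in> {1..N}" "j \<noteq> k" "x > 0"
  shows "measure_pmf.prob (T_pmf \<alpha> N) {T. x \<le> real (gcd (T j) (T k))} \<le> C_const s / x powr s"
proof -
  define M where "M = nat \<lfloor>exp (\<alpha> * real N)\<rfloor>"
  have S: "sample_set \<alpha> N = {1..M}" and M1: "M \<ge> 1"
    using sample_set_eq[OF assms(1), of N] by (auto simp: M_def)
  let ?S = "{1..M}"
  let ?A = "{(a, b). x \<le> real (gcd a b)}"
  have "{T. x \<le> real (gcd (T j) (T k))} = (\<lambda>T. (T j, T k)) -` ?A" by auto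
  then have "measure_pmf.prob (T_pmf \<alpha> N) {T. x \<le> real (gcd (T j) (T k))}
      = measure_pmf.prob (map_pmf (\<lambda>T. (T j, T k)) (T_pmf \<alpha> N)) ?A"
    by (simp add: measure_map_pmf)
  also have "map_pmf (\<lambda>T. (T j, T k)) (T_pmf \<alpha> N) = pair_pmf (pmf_of_set ?S) (pmf_of_set ?S)"
    unfolding T_pmf_def S using assms by (subst Pi_pmf_pair) auto
  also have "\<dots> = pmf_of_set (?S \<times> ?S)" using M1 by (intro pair_pmf_of_set) auto
  also have "measure_pmf.prob (pmf_of_set (?S \<times> ?S)) ?A
      = real (card (?S \<times> ?S \<inter> ?A)) / real (card (?S \<times> ?S))"
    using M1 by (intro measure_pmf_of_set) auto
  also have "\<dots> \<le> (real M ^ 2 * C_const s / x powr s) / real (card (?S \<times> ?S))"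
    using card_bound[OF assms(7,2,3), of M] by (intro divide_right_mono) auto
  also have "\<dots> = C_const s / x powr s"
    using M1 by (simp add: card_cartesian_product power2_eq_square)
  finally show ?thesis .
qed



lemma card_pairs: "2 * card {(j, k). 1 \<le> j \<and> j < k \<and> k \<le> (N::nat)} \<le> N ^ 2"
proof -
  let ?P = "{(j, k). 1 \<le> j \<and> j < k \<and> k \<le> (N::nat)}"
  have fin: "finite ?P" by (rule finite_subset[of _ "{1..N} \<times> {1..N}"]) auto
  have "card (prod.swap ` ?P) = card ?P" by (rule card_image) (simp add: inj_on_def)
  moreover have "card (?P \<union> prod.swap ` ?P) = card ?P + card (prod.swap ` ?P)"
    using fin by (intro card_Un_disjoint) auto
  moreover have "card (?P \<union> prod.swap ` ?P) \<le> card ({1..N} \<times> {1..N})"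
    by (intro card_mono) auto
  ultimately show ?thesis by (simp add: card_cartesian_product power2_eq_square)
qed

theorem theorem1p1:
  fixes \<alpha> :: real
  assumes "\<alpha> > 0"
  shows "(\<forall>s::real. 0 < s \<and> s < 1 \<longrightarrow> convergent_prod (Cfactor s))
    \<and> (\<forall>s::real. \<forall>b::real. \<forall>N::nat. 0 < s \<and> s < 1 \<and> b > 0 \<and> N \<ge> 2 \<longrightarrow>
         measure_pmf.prob (T_pmf \<alpha> N)
           {T. Max {real (gcd (T j) (T k)) | j k. 1 \<le> j \<and> j < k \<and> k \<le> N}
                 \<ge> real N powr (2 / s) * b powr (1 / s)}
         \<le> C_const s / (2 * b))"
proof (intro conjI allI impI)
  fix s :: real assume "0 < s \<and> s < 1"
  then show "convergent_prod (Cfactor s)" by (intro Cfactor_conv) auto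
next
  fix s b :: real and N :: nat
  assume h: "0 < s \<and> s < 1 \<and> b > 0 \<and> N \<ge> 2"
  then have s0: "0 < s" and s1: "s < 1" and b0: "b > 0" and N2: "N \<ge> 2" by auto
  define x where "x = real N powr (2 / s) * b powr (1 / s)"
  have x0: "x > 0" using N2 b0 by (simp add: x_def)
  have xs: "x powr s = real N ^ 2 * b"
  proof -
    have "x powr s = (real N powr (2 / s)) powr s * (b powr (1 / s)) powr s"
      using N2 b0 by (simp add: x_def powr_mult)
    also have "\<dots> = real N powr 2 * b" using s0 b0 by (simp add: powr_powr)
    also have "real N powr 2 = real N ^ 2" using N2 by (simp add: powr_numeral)
    finally show ?thesis .
  qed
  define Pairs where "Pairs = {(j, k). 1 \<le> j \<and> j < k \<and> k \<le> N}"
  have finP: "finite Pairs" unfolding Pairs_def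
    by (rule finite_subset[of _ "{1..N} \<times> {1..N}"]) auto
  have neP: "(1, 2) \<in> Pairs" using N2 by (simp add: Pairs_def)
  define E where "E = (\<lambda>jk::nat\<times>nat. {T::nat\<Rightarrow>nat. x \<le> real (gcd (T (fst jk)) (T (snd jk)))})"
  have sub: "{T. Max {real (gcd (T j) (T k)) | j k. 1 \<le> j \<and> j < k \<and> k \<le> N}
                 \<ge> real N powr (2 / s) * b powr (1 / s)} \<subseteq> (\<Union>jk\<in>Pairs. E jk)"
  proof
    fix T assume "T \<in> {T. Max {real (gcd (T j) (T k)) | j k. 1 \<le> j \<and> j < k \<and> k \<le> N}
                 \<ge> real N powr (2 / s) * b powr (1 / s)}"
    then have mx: "x \<le> Max {real (gcd (T j) (T k)) | j k. 1 \<le> j \<and> j < k \<and> k \<le> N}"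
      by (simp add: x_def)
    have V: "{real (gcd (T j) (T k)) | j k. 1 \<le> j \<and> j < k \<and> k \<le> N}
         = (\<lambda>jk. real (gcd (T (fst jk)) (T (snd jk)))) ` Pairs"
      by (auto simp: Pairs_def image_def)
    have "Max ((\<lambda>jk. real (gcd (T (fst jk)) (T (snd jk)))) ` Pairs)
          \<in> (\<lambda>jk. real (gcd (T (fst jk)) (T (snd jk)))) ` Pairs"
      using finP neP by (intro Max_in) auto
    then obtain jk where jk: "jk \<in> Pairs"
      and eq: "Max ((\<lambda>jk. real (gcd (T (fst jk)) (T (snd jk)))) ` Pairs)
               = real (gcd (T (fst jk)) (T (snd jk)))" by auto
    have "T \<in> E jk" using mx unfolding V eq E_def by simp
    then show "T \<in> (\<Union>jk\<in>Pairs. E jk)" using jk by auto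
  qed
  have C1: "C_const s \<ge> 1" using Cfactor_prod_le[OF s0 s1, of 0] by simp
  have "measure_pmf.prob (T_pmf \<alpha> N)
           {T. Max {real (gcd (T j) (T k)) | j k. 1 \<le> j \<and> j < k \<and> k \<le> N}
                 \<ge> real N powr (2 / s) * b powr (1 / s)}
       \<le> measure_pmf.prob (T_pmf \<alpha> N) (\<Union>jk\<in>Pairs. E jk)"
    by (rule measure_pmf.finite_measure_mono[OF sub]) simp
  also have "\<dots> \<le> (\<Sum>jk\<in>Pairs. measure_pmf.prob (T_pmf \<alpha> N) (E jk))"
    using finP by (intro measure_pmf.finite_measure_subadditive_finite) simp_all
  also have "\<dots> \<le> (\<Sum>jk\<in>Pairs. C_const s / x powr s)"
  proof (rule sum_mono)
    fix jk assume "jk \<in> Pairs"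
    then show "measure_pmf.prob (T_pmf \<alpha> N) (E jk) \<le> C_const s / x powr s"
      unfolding E_def using pair_prob[OF assms s0 s1 _ _ _ x0, of "fst jk" N "snd jk"]
      by (auto simp: Pairs_def)
  qed
  also have "\<dots> = real (card Pairs) * C_const s / (real N ^ 2 * b)"
    by (simp add: xs)
  also have "\<dots> \<le> C_const s / (2 * b)"
  proof -
    have "2 * real (card Pairs) \<le> real N ^ 2"
    proof -
      have "2 * card Pairs \<le> N ^ 2" using card_pairs[of N] unfolding Pairs_def .
      then have "real (2 * card Pairs) \<le> real (N ^ 2)" by (rule of_nat_mono)
      then show ?thesis by simp
    qed
    then have "real (card Pairs) * C_const s * (2 * b) \<le> C_const s * (real N ^ 2 * b)"
      using C1 b0 by (simp add: algebra_simps mult_left_mono mult_right_mono)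
    moreover have "real N ^ 2 * b > 0" using N2 b0 by simp
    moreover have "real N ^ 2 > 0" using N2 by simp
    ultimately show ?thesis using b0 by (simp add: field_simps pos_divide_le_eq)
  qed
  finally show "measure_pmf.prob (T_pmf \<alpha> N)
           {T. Max {real (gcd (T j) (T k)) | j k. 1 \<le> j \<and> j < k \<and> k \<le> N}
                 \<ge> real N powr (2 / s) * b powr (1 / s)}
         \<le> C_const s / (2 * b)" .
qed

end
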